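(* Let $p \geqslant 7$ be a prime and let $V$ be a $1$-dimensional vector space over $\mathbb{F}_p$. Let $G = \mathrm{Sym}(V)$, let $H = \mathrm{AGL}(V)$, and let $T$ be the group of diagonal matrices in $\mathrm{GL}(V)$ (here $T = \mathrm{GL}(V)$). Then there exists $x \in G$ such that $H \cap H^x = T$.
   Context: $\mathrm{AGL}(V)$ is the group of invertible affine transformations $\mathbf{v} \mapsto \mathbf{v}g + \mathbf{u}$ ($g \in \mathrm{GL}(V)$, $\mathbf{u} \in V$) of $V$, regarded as a subgroup of $\mathrm{Sym}(V)$. *)

theory Defs
  imports "HOL-Computational_Algebra.Primes"
begin

text \<open>V is a 1-dimensional vector space over F_p; we identify V with the field F_p itself,
  modelled as a finite field type of prime cardinality p.
  Sym(V): all bijections V -> V.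
  T: diagonal matrices in GL(V) = GL(V) = nonzero scalar multiplications.\<close>

definition Sym_V :: "('a \<Rightarrow> 'a) set" where
  "Sym_V = {f. bij f}"

definition AGL_V :: "('a::field \<Rightarrow> 'a) set" where
  "AGL_V = {f. \<exists>g u. g \<noteq> 0 \<and> f = (\<lambda>v. v * g + u)}"

definition GL_V :: "('a::field \<Rightarrow> 'a) set" where
  "GL_V = {f. \<exists>g. g \<noteq> 0 \<and> f = (\<lambda>v. v * g)}"

text \<open>Conjugate H^x = x^{-1} H x with right actions: v^(x^{-1} h x) = x (h (x^{-1} v)).\<close>
definition conj_set :: "('a \<Rightarrow> 'a) set \<Rightarrow> ('a \<Rightarrow> 'a) \<Rightarrow> ('a \<Rightarrow> 'a) set" where
  "conj_set H x = (\<lambda>h. x \<circ> h \<circ> inv x) ` H"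

end

theory Submission
  imports Defs "HOL-Number_Theory.Residues"
begin

lemma inv_inverse_eq: "Hilbert_Choice.inv (inverse :: 'a::field \<Rightarrow> 'a) = inverse"
  by (rule inv_equality) auto

lemma bij_inverse: "bij (inverse :: 'a::field \<Rightarrow> 'a)"
  by (rule o_bij[of inverse]) auto

theorem lemma3p2:
  fixes p :: nat
  assumes "prime p" and "p \<ge> 7" and "card (UNIV :: ('a::{finite,field}) set) = p"
  shows "\<exists>x \<in> (Sym_V :: ('a \<Rightarrow> 'a) set). AGL_V \<inter> conj_set AGL_V x = GL_V"
proof -
  have "CHAR('a) dvd p" using CHAR_dvd_CARD[where 'a='a] assms(3) by simp
  hence charp: "CHAR('a) = p" using assms(1) CHAR_not_1'[where 'a='a]
    by (metis One_nat_def prime_nat_iff)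
  have two: "(2::'a) \<noteq> 0"
  proof
    assume "(2::'a) = 0"
    hence "of_nat 2 = (0::'a)" by simp
    hence "p dvd 2" using of_nat_eq_0_iff_char_dvd charp by metis
    thus False using assms(2) by (auto dest: dvd_imp_le)
  qed
  have three: "(3::'a) \<noteq> 0"
  proof
    assume "(3::'a) = 0"
    hence "of_nat 3 = (0::'a)" by simp
    hence "p dvd 3" using of_nat_eq_0_iff_char_dvd charp by metis
    thus False using assms(2) by (auto dest: dvd_imp_le)
  qed
  have "AGL_V \<inter> conj_set AGL_V inverse = (GL_V :: ('a \<Rightarrow> 'a) set)"
  proof
    show "(GL_V :: ('a \<Rightarrow> 'a) set) \<subseteq> AGL_V \<inter> conj_set AGL_V inverse"
    proof (rule subsetI)
      fix f :: "'a \<Rightarrow> 'a" assume "f \<in> GL_V"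
      then obtain g where g: "g \<noteq> 0" "f = (\<lambda>v. v * g)" unfolding GL_V_def by auto
      have "f \<in> AGL_V" unfolding AGL_V_def using g by (intro CollectI exI[of _ g] exI[of _ 0]) auto
      moreover have "f = inverse \<circ> (\<lambda>v. v * inverse g + 0) \<circ> Hilbert_Choice.inv inverse"
        unfolding inv_inverse_eq g by (auto simp: fun_eq_iff field_simps)
      moreover have "(\<lambda>v. v * inverse g + 0) \<in> AGL_V" unfolding AGL_V_def using g by (intro CollectI exI[of _ "inverse g"] exI[of _ 0]) auto
      ultimately have "f \<in> AGL_V \<inter> conj_set AGL_V inverse" unfolding conj_set_def by blast
      thus "f \<in> AGL_V \<inter> conj_set AGL_V inverse" by assumption
    qed
  next
    show "AGL_V \<inter> conj_set AGL_V inverse \<subseteq> (GL_V :: ('a \<Rightarrow> 'a) set)"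
    proof (rule subsetI)
      fix f :: "'a \<Rightarrow> 'a" assume f: "f \<in> AGL_V \<inter> conj_set AGL_V inverse"
      then obtain c d where cd: "c \<noteq> 0" "f = (\<lambda>v. v * c + d)" unfolding AGL_V_def by auto
      from f obtain h where h: "h \<in> AGL_V" "f = inverse \<circ> h \<circ> Hilbert_Choice.inv inverse"
        unfolding conj_set_def by auto
      then obtain a b where ab: "a \<noteq> 0" "h = (\<lambda>v. v * a + b)" unfolding AGL_V_def by auto
      have fe: "\<And>v. v * c + d = inverse (inverse v * a + b)"
        using h(2) cd(2) ab(2) unfolding inv_inverse_eq by (metis comp_apply)
      have d: "d = inverse b" using fe[of 0] by simp
      show "f \<in> GL_V"
      proof (cases "b = 0")
        case True
        hence "f = (\<lambda>v. v * inverse a)" using fe d cd(2) by (auto simp: fun_eq_iff field_simps)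
        thus ?thesis unfolding GL_V_def using ab by (intro CollectI exI[of _ "inverse a"]) auto
      next
        case False
        have i1: "inverse (- a / b) * a + b = 0" using False ab(1) by (simp add: field_simps)
        have e1: "(- a / b) * c + d = 0" using fe[of "- a / b"] unfolding i1 by simp
        have i2: "inverse (a / b) * a + b = 2 * b" using False ab(1) by (simp add: field_simps)
        have e2: "(a / b) * c + d = inverse (2 * b)" using fe[of "a / b"] unfolding i2 by simp
        have "b * ((- a / b) * c + d) = 0" by (simp only: e1 mult_zero_right)
        hence ac: "a * c = 1" using d False by (simp add: field_simps)
        have "b * ((a / b) * c + d) = b * inverse (2 * b)" by (simp only: e2)
        moreover have "b * ((a / b) * c + d) = a * c + b * d" using False by (simp add: field_simps)
        moreover have "b * d = 1" using d False by simp
        moreover have "b * inverse (2 * b) = inverse 2" using False by (simp add: inverse_mult_distrib)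
        ultimately have "(2::'a) = inverse 2" using ac by (metis one_add_one)
        hence "(2::'a) * 2 = 1" using two by (metis right_inverse)
        hence "(3::'a) = 0" by (metis add_diff_cancel_right' diff_self numeral_Bit1 numeral_One mult_2 one_add_one add.assoc)
        thus ?thesis using three by simp
      qed
    qed
  qed
  moreover have "inverse \<in> (Sym_V :: ('a \<Rightarrow> 'a) set)" unfolding Sym_V_def using bij_inverse by auto
  ultimately show ?thesis by blast
qed

end
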